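(* Let $n\ge1$ and $d\ge1$ be integers, and let $\mu_n$ be a symmetric measure on $(\mathbb{R}^d)^n$ (i.e. invariant under permutations of the $n$ coordinates $\xi_1,\dots,\xi_n\in\mathbb{R}^d$). Then for any $0<s\le t$ and any measurable non-negative function $h$ on $(0,\infty)^n\times(\mathbb{R}^d)^n$ for which the integrals make sense, $$\sum_{\rho\in\Sigma_n}\int_{T_n(t)}\int_{T_n(s)}\int_{(\mathbb{R}^d)^n}h(t_1,\dots,t_n,\xi_1,\dots,\xi_n)\,h(s_1,\dots,s_n,\xi_{\rho(1)},\dots,\xi_{\rho(n)})\,\mu_n(d\xi_1\cdots d\xi_n)\,ds_1\cdots ds_n\,dt_1\cdots dt_n$$ $$\le\frac{s^n+t^n}{2}\int_{T_n(t)}\int_{(\mathbb{R}^d)^n}|h(t_1,\dots,t_n,\xi_1,\dots,\xi_n)|^2\mu_n(d\xi_1\cdots d\xi_n)\,dt_1\cdots dt_n.$$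
   Context: $\Sigma_n$ is the set of permutations of $\{1,\dots,n\}$, and $T_n(t)=\{(t_1,\dots,t_n):0<t_1<\dots<t_n<t\}$. *)

theory Defs
  imports "HOL-Analysis.Analysis"
begin

text \<open>Points of a product space indexed by \<open>{..<n}\<close> (0-based indices: coordinate i
  corresponds to the paper's coordinate i+1).\<close>

definition simplexT :: "nat \<Rightarrow> real \<Rightarrow> (nat \<Rightarrow> real) set" where
  "simplexT n t = {x \<in> PiE {..<n} (\<lambda>_. UNIV).
      (\<forall>i<n. 0 < x i \<and> x i < t) \<and> (\<forall>i. Suc i < n \<longrightarrow> x i < x (Suc i))}"

definition lebn :: "nat \<Rightarrow> (nat \<Rightarrow> real) measure" where
  "lebn n = PiM {..<n} (\<lambda>_. lborel)"

definition symmetric_measure :: "nat \<Rightarrow> (nat \<Rightarrow> 'a::euclidean_space) measure \<Rightarrow> bool" where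
  "symmetric_measure n \<mu> \<longleftrightarrow>
     sets \<mu> = sets (PiM {..<n} (\<lambda>_. (borel :: 'a measure))) \<and>
     (\<forall>\<rho>. \<rho> permutes {..<n} \<longrightarrow>
        (\<forall>A \<in> sets \<mu>. emeasure \<mu> ((\<lambda>\<xi>. \<xi> \<circ> \<rho>) -` A \<inter> space \<mu>) = emeasure \<mu> A))"

end

theory Submission imports Defs begin

lemma chain_less:
  assumes "\<forall>i. Suc i < m \<longrightarrow> (f::nat\<Rightarrow>real) i < f (Suc i)" "i < j" "j < m"
  shows "f i < f j"
  using assms(2,3)
proof (induction j)
  case 0 then show ?case by simp
next
  case (Suc j)
  show ?case
  proof (cases "i = j")
    case True
    then show ?thesis using assms(1) Suc.prems by auto
  next
    case False
    then have "f i < f j" using Suc by auto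
    also have "f j < f (Suc j)" using assms(1) Suc.prems by auto
    finally show ?thesis .
  qed
qed

lemma simplexT_sets: "simplexT n t \<in> sets (lebn n)"
proof -
  have cm: "(\<lambda>x. x i) \<in> borel_measurable (lebn n)" if "i < n" for i
    unfolding lebn_def measurable_lborel1[symmetric] using that by (intro measurable_component_singleton) auto
  have A: "{x \<in> space (lebn n). \<forall>i\<in>{..<n}. 0 < x i \<and> x i < t} \<in> sets (lebn n)"
  proof (rule sets.sets_Collect_finite_All[where P="\<lambda>i x. 0 < x i \<and> x i < t"])
    fix i assume i: "i \<in> {..<n}"
    have [measurable]: "(\<lambda>x. x i) \<in> borel_measurable (lebn n)" using cm i by auto
    show "{x \<in> space (lebn n). 0 < x i \<and> x i < t} \<in> sets (lebn n)" by measurable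
  qed simp
  have B: "{x \<in> space (lebn n). \<forall>i\<in>{..<n}. Suc i < n \<longrightarrow> x i < x (Suc i)} \<in> sets (lebn n)"
  proof (rule sets.sets_Collect_finite_All[where P="\<lambda>i x. Suc i < n \<longrightarrow> x i < x (Suc i)"])
    fix i assume i: "i \<in> {..<n}"
    show "{x \<in> space (lebn n). Suc i < n \<longrightarrow> x i < x (Suc i)} \<in> sets (lebn n)"
    proof (cases "Suc i < n")
      case True
      have [measurable]: "(\<lambda>x. x i) \<in> borel_measurable (lebn n)" "(\<lambda>x. x (Suc i)) \<in> borel_measurable (lebn n)"
        using cm True by auto
      show ?thesis using True by measurable
    next
      case False then show ?thesis by simp
    qed
  qed simp
  have "simplexT n t = {x \<in> space (lebn n). \<forall>i\<in>{..<n}. 0 < x i \<and> x i < t} \<inter>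
          {x \<in> space (lebn n). \<forall>i\<in>{..<n}. Suc i < n \<longrightarrow> x i < x (Suc i)}"
    by (auto simp: simplexT_def lebn_def space_PiM)
  with sets.Int[OF A B] show ?thesis by (simp only:)
qed

lemma simplexT_slice:
  assumes x: "x \<in> space (lebn n)" and mem: "x(n := y) \<in> simplexT (Suc n) t"
  shows "y \<in> {0<..<t} \<and> x \<in> simplexT n y"
proof -
  let ?x = "x(n := y)"
  have ch: "\<forall>i. Suc i < Suc n \<longrightarrow> ?x i < ?x (Suc i)" and bd: "\<forall>i<Suc n. 0 < ?x i \<and> ?x i < t"
    using mem by (auto simp: simplexT_def)
  have y: "0 < y \<and> y < t" using bd[rule_format, of n] by simp
  have xe: "x \<in> PiE {..<n} (\<lambda>_. UNIV)" using x by (simp add: lebn_def space_PiM)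
  have "x i < y" if "i < n" for i
    using chain_less[OF ch, of i n] that by simp
  moreover have "0 < x i" if "i < n" for i
    using bd[rule_format, of i] that by simp
  moreover have "x i < x (Suc i)" if "Suc i < n" for i
    using ch[rule_format, of i] that by simp
  ultimately show ?thesis using y xe by (auto simp: simplexT_def)
qed

lemma simplexT_vol: "0 \<le> t \<Longrightarrow> emeasure (lebn n) (simplexT n t) \<le> ennreal (t ^ n / fact n)"
proof (induction n arbitrary: t)
  case 0
  have "simplexT 0 t \<subseteq> space (lebn 0)" using sets.sets_into_space[OF simplexT_sets] .
  then have "emeasure (lebn 0) (simplexT 0 t) \<le> emeasure (lebn 0) (space (lebn 0))"
    by (intro emeasure_mono) auto
  also have "\<dots> = 1" by (simp add: lebn_def PiM_empty)
  finally show ?case by simp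
next
  case (Suc n)
  interpret product_sigma_finite "\<lambda>_. lborel" by standard
  have L: "lebn (Suc n) = PiM (insert n {..<n}) (\<lambda>_. lborel)"
    by (simp add: lebn_def lessThan_Suc)
  have "emeasure (lebn (Suc n)) (simplexT (Suc n) t) = (\<integral>\<^sup>+ z. indicator (simplexT (Suc n) t) z \<partial>lebn (Suc n))"
    using simplexT_sets by simp
  also have "\<dots> = (\<integral>\<^sup>+ y. (\<integral>\<^sup>+ x. indicator (simplexT (Suc n) t) (x(n := y)) \<partial>lebn n) \<partial>lborel)"
    unfolding lebn_def lessThan_Suc
    by (rule product_nn_integral_insert_rev) (use simplexT_sets[of "Suc n" t] L in \<open>auto simp: lebn_def\<close>)
  also have "\<dots> \<le> (\<integral>\<^sup>+ y. (\<integral>\<^sup>+ x. indicator {0<..<t} y * indicator (simplexT n y) x \<partial>lebn n) \<partial>lborel)"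
    apply (intro nn_integral_mono)
    using simplexT_slice by (auto simp: indicator_def)
  also have "\<dots> = (\<integral>\<^sup>+ y. indicator {0<..<t} y * emeasure (lebn n) (simplexT n y) \<partial>lborel)"
    by (intro nn_integral_cong nn_integral_cmult_indicator simplexT_sets)
  also have "\<dots> \<le> (\<integral>\<^sup>+ y. ennreal (y ^ n / fact n) * indicator {0..t} y \<partial>lborel)"
    apply (intro nn_integral_mono)
    subgoal for y using Suc.IH[of y] by (auto simp: indicator_def)
    done
  also have "\<dots> = ennreal (t ^ Suc n / fact (Suc n) - 0 ^ Suc n / fact (Suc n))"
  proof (rule nn_integral_FTC_Icc)
    fix x :: real
    show "((\<lambda>x. x ^ Suc n / fact (Suc n)) has_real_derivative x ^ n / fact n) (at x)"
    proof -
      have d: "((\<lambda>x. x ^ Suc n / fact (Suc n)) has_real_derivative (real (Suc n) * x ^ (Suc n - 1) / fact (Suc n))) (at x)"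
        by (intro DERIV_cdivide) (use DERIV_pow[of "Suc n" x] in simp)
      have e: "real (Suc n) * x ^ (Suc n - 1) / fact (Suc n) = x ^ n / fact n"
        by (simp only: fact_Suc of_nat_mult diff_Suc_1) (simp add: field_simps del: of_nat_Suc)
      show ?thesis using d unfolding e .
    qed
  qed (use Suc.prems in auto)
  also have "\<dots> = ennreal (t ^ Suc n / fact (Suc n))" by simp
  finally show ?case .
qed

lemma inner_add_le:
  fixes f :: "'b \<Rightarrow> ennreal" and c k :: ennreal
  assumes A: "A \<in> sets M" and k: "k < top"
  shows "(\<integral>\<^sup>+x\<in>A. (c + k * f x) \<partial>M) \<le> c * emeasure M A + k * (\<integral>\<^sup>+x\<in>A. f x \<partial>M)"
proof -
  let ?F = "\<lambda>x. (c + k * f x) * indicator A x"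
  have "integral\<^sup>S M u \<le> c * emeasure M A + k * (\<integral>\<^sup>+x\<in>A. f x \<partial>M)"
    if u: "simple_function M u" "u \<le> ?F" for u
  proof -
    have um[measurable]: "u \<in> borel_measurable M" using u(1) by (rule borel_measurable_simple_function)
    define v where "v x = (if u x \<le> c then 0 else u x - c) * indicator A x" for x
    have vm[measurable]: "v \<in> borel_measurable M" unfolding v_def using A by measurable
    have uF: "u x \<le> (c + k * f x) * indicator A x" for x using u(2) by (auto simp: le_fun_def)
    have pt: "u x \<le> c * indicator A x + v x" for x
    proof (cases "x \<in> A")
      case True
      then show ?thesis by (cases "u x \<le> c") (auto simp: v_def add_diff_inverse_ennreal)
    next
      case False
      then show ?thesis using uF[of x] by (simp add: v_def)
    qed
    have vle: "v x \<le> k * (f x * indicator A x)" for x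
      using uF[of x] by (cases "x \<in> A") (auto simp: v_def ennreal_minus_le_iff add.commute)
    have "integral\<^sup>S M u = (\<integral>\<^sup>+x. u x \<partial>M)"
      using u(1) by (simp add: nn_integral_eq_simple_integral)
    also have "\<dots> \<le> (\<integral>\<^sup>+x. c * indicator A x + v x \<partial>M)"
      by (intro nn_integral_mono pt)
    also have "\<dots> = c * emeasure M A + (\<integral>\<^sup>+x. v x \<partial>M)"
      using A by (simp add: nn_integral_add nn_integral_cmult_indicator)
    also have "(\<integral>\<^sup>+x. v x \<partial>M) \<le> k * (\<integral>\<^sup>+x\<in>A. f x \<partial>M)"
    proof (cases "k = 0")
      case True
      then have "v x = 0" for x using vle[of x] by simp
      then show ?thesis by simp
    next
      case False
      have "(\<integral>\<^sup>+x. v x \<partial>M) = (\<integral>\<^sup>+x. k * (v x / k) \<partial>M)"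
        using False k by (intro nn_integral_cong) (metis ennreal_times_divide mult.commute mult_divide_eq_ennreal less_imp_neq)
      also have "\<dots> = k * (\<integral>\<^sup>+x. v x / k \<partial>M)"
        by (rule nn_integral_cmult) measurable
      also have "(\<integral>\<^sup>+x. v x / k \<partial>M) \<le> (\<integral>\<^sup>+x\<in>A. f x \<partial>M)"
        using False vle by (intro nn_integral_mono divide_le_posI_ennreal) (auto simp: zero_less_iff_neq_zero)
      finally show ?thesis by (simp add: mult_left_mono)
    qed
    finally show ?thesis by (simp add: add_left_mono)
  qed
  then show ?thesis
    unfolding nn_integral_def by (intro SUP_least) auto
qed


lemma simplexT_mono: "s \<le> t \<Longrightarrow> simplexT n s \<subseteq> simplexT n t"
  unfolding simplexT_def by auto

lemma perm_meas:
  fixes n :: nat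
  assumes \<rho>: "\<rho> permutes {..<n}"
  shows "(\<lambda>\<xi>. \<xi> \<circ> \<rho>) \<in> measurable (PiM {..<n} (\<lambda>_. (borel :: 'a::euclidean_space measure))) (PiM {..<n} (\<lambda>_. borel))"
proof -
  have "(\<lambda>\<omega> i. \<omega> (\<rho> i)) \<in> measurable (PiM {..<n} (\<lambda>_. (borel :: 'a measure))) (PiM {..<n} (\<lambda>_. borel))"
  proof (rule measurable_PiM_single')
    fix i assume "i \<in> {..<n}"
    then have "\<rho> i \<in> {..<n}" using permutes_in_image[OF \<rho>, of i] by simp
    then show "(\<lambda>\<omega>. \<omega> (\<rho> i)) \<in> measurable (PiM {..<n} (\<lambda>_. (borel :: 'a measure))) borel"
      by (rule measurable_component_singleton)
  next
    show "(\<lambda>\<omega> i. \<omega> (\<rho> i)) \<in> space (PiM {..<n} (\<lambda>_. (borel :: 'a measure))) \<rightarrow> PiE {..<n} (\<lambda>i. space (borel :: 'a measure))"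
      using permutes_not_in[OF \<rho>] by (auto simp: space_PiM PiE_iff extensional_def)
  qed
  then show ?thesis by (simp add: comp_def)
qed

lemma sym_int:
  fixes \<mu> :: "(nat \<Rightarrow> 'a::euclidean_space) measure" and n :: nat
  assumes sym: "symmetric_measure n \<mu>" and \<rho>: "\<rho> permutes {..<n}" and f: "f \<in> borel_measurable \<mu>"
  shows "(\<integral>\<^sup>+\<xi>. f (\<xi> \<circ> \<rho>) \<partial>\<mu>) = (\<integral>\<^sup>+\<xi>. f \<xi> \<partial>\<mu>)"
proof -
  have S: "sets \<mu> = sets (PiM {..<n} (\<lambda>_. (borel :: 'a measure)))" using sym by (simp add: symmetric_measure_def)
  have m: "(\<lambda>\<xi>. \<xi> \<circ> \<rho>) \<in> measurable \<mu> \<mu>"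
    using perm_meas[OF \<rho>] measurable_cong_sets[OF S S] by simp
  have D: "distr \<mu> \<mu> (\<lambda>\<xi>. \<xi> \<circ> \<rho>) = \<mu>"
    by (rule measure_eqI) (use sym \<rho> m in \<open>auto simp: emeasure_distr symmetric_measure_def\<close>)
  have "(\<integral>\<^sup>+\<xi>. f \<xi> \<partial>\<mu>) = (\<integral>\<^sup>+\<xi>. f \<xi> \<partial>distr \<mu> \<mu> (\<lambda>\<xi>. \<xi> \<circ> \<rho>))" by (simp add: D)
  also have "\<dots> = (\<integral>\<^sup>+\<xi>. f (\<xi> \<circ> \<rho>) \<partial>\<mu>)" by (rule nn_integral_distr[OF m]) (use f in simp)
  finally show ?thesis ..
qed

lemma amgm_ennreal:
  fixes a b :: real
  shows "ennreal (a * b) \<le> ennreal (1/2) * ennreal (\<bar>a\<bar> ^ 2) + ennreal (1/2) * ennreal (\<bar>b\<bar> ^ 2)"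
proof -
  have "0 \<le> (a - b)^2" by simp
  then have r: "a * b \<le> 1/2 * \<bar>a\<bar>^2 + 1/2 * \<bar>b\<bar>^2" by (simp add: power2_eq_square algebra_simps)
  have e: "ennreal (1/2 * \<bar>a\<bar>^2 + 1/2 * \<bar>b\<bar>^2) = ennreal (1/2) * ennreal (\<bar>a\<bar> ^ 2) + ennreal (1/2) * ennreal (\<bar>b\<bar> ^ 2)"
    by (simp only: ennreal_plus[of "1/2 * \<bar>a\<bar>^2" "1/2 * \<bar>b\<bar>^2"] ennreal_mult[of "1/2" "\<bar>a\<bar>^2"] ennreal_mult[of "1/2" "\<bar>b\<bar>^2"] zero_le_power2 abs_ge_zero zero_le_divide_iff zero_le_one zero_le_numeral mult_nonneg_nonneg simp_thms)
  show ?thesis using r unfolding e[symmetric] by (rule ennreal_leI)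
qed

lemma fact_vol:
  assumes "0 \<le> t"
  shows "of_nat (fact n) * emeasure (lebn n) (simplexT n t) \<le> ennreal (t ^ n)"
proof -
  have "of_nat (fact n) * emeasure (lebn n) (simplexT n t) \<le> ennreal (fact n) * ennreal (t ^ n / fact n)"
    using simplexT_vol[OF assms, of n] by (simp add: ennreal_of_nat_eq_real_of_nat mult_left_mono)
  also have "\<dots> = ennreal (t ^ n)"
    by (subst ennreal_mult[symmetric]) (use assms in auto)
  finally show ?thesis .
qed

theorem lemmaA1:
  fixes n :: nat and \<mu> :: "(nat \<Rightarrow> 'a::euclidean_space) measure"
    and h :: "(nat \<Rightarrow> real) \<Rightarrow> (nat \<Rightarrow> 'a) \<Rightarrow> real"
    and s t :: real
  assumes "n \<ge> 1"
    and "symmetric_measure n \<mu>"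
    and "0 < s" and "s \<le> t"
    and "(\<lambda>(x, \<xi>). h x \<xi>) \<in> borel_measurable (lebn n \<Otimes>\<^sub>M PiM {..<n} (\<lambda>_. (borel :: 'a measure)))"
    and "\<And>x \<xi>. h x \<xi> \<ge> 0"
  shows "(\<Sum>\<rho>\<in>{\<rho>. \<rho> permutes {..<n}}.
            \<integral>\<^sup>+ tt \<in> simplexT n t. (\<integral>\<^sup>+ ss \<in> simplexT n s.
               (\<integral>\<^sup>+ \<xi>. ennreal (h tt \<xi> * h ss (\<xi> \<circ> \<rho>)) \<partial>\<mu>) \<partial>lebn n) \<partial>lebn n)
         \<le> ennreal ((s ^ n + t ^ n) / 2) *
            (\<integral>\<^sup>+ tt \<in> simplexT n t. (\<integral>\<^sup>+ \<xi>. ennreal (\<bar>h tt \<xi>\<bar> ^ 2) \<partial>\<mu>) \<partial>lebn n)"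
proof -
  let ?L = "lebn n"
  let ?T = "simplexT n t" and ?S = "simplexT n s"
  define G where "G x = (\<integral>\<^sup>+ \<xi>. ennreal (\<bar>h x \<xi>\<bar> ^ 2) \<partial>\<mu>)" for x
  define hf where "hf = ennreal (1/2)"
  define I where "I = (\<integral>\<^sup>+ tt \<in> ?T. G tt \<partial>?L)"
  define J where "J = (\<integral>\<^sup>+ ss \<in> ?S. G ss \<partial>?L)"
  define Vt where "Vt = emeasure ?L ?T"
  define Vs where "Vs = emeasure ?L ?S"
  have S: "sets \<mu> = sets (PiM {..<n} (\<lambda>_. (borel :: 'a measure)))"
    using assms(2) by (simp add: symmetric_measure_def)
  have hm: "(\<lambda>\<xi>. h x \<xi>) \<in> borel_measurable \<mu>" if "x \<in> space ?L" for x
    unfolding measurable_cong_sets[OF S refl] using measurable_Pair2[OF assms(5) that] by simp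
  have Tsp: "simplexT n r \<subseteq> space ?L" for r using sets.sets_into_space[OF simplexT_sets] .
  have step1: "(\<integral>\<^sup>+ \<xi>. ennreal (h tt \<xi> * h ss (\<xi> \<circ> \<rho>)) \<partial>\<mu>) \<le> hf * G tt + hf * G ss"
    if tt: "tt \<in> space ?L" and ss: "ss \<in> space ?L" and \<rho>: "\<rho> permutes {..<n}" for tt ss \<rho>
  proof -
    have [measurable]: "(\<lambda>\<xi>. h tt \<xi>) \<in> borel_measurable \<mu>" "(\<lambda>\<xi>. h ss \<xi>) \<in> borel_measurable \<mu>"
      using hm tt ss by auto
    have pm: "(\<lambda>\<xi>. \<xi> \<circ> \<rho>) \<in> measurable \<mu> \<mu>"
      using perm_meas[OF \<rho>] measurable_cong_sets[OF S S] by simp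
    have [measurable]: "(\<lambda>\<xi>. h ss (\<xi> \<circ> \<rho>)) \<in> borel_measurable \<mu>"
      using measurable_compose[OF pm hm[OF ss]] .
    have "(\<integral>\<^sup>+ \<xi>. ennreal (h tt \<xi> * h ss (\<xi> \<circ> \<rho>)) \<partial>\<mu>)
        \<le> (\<integral>\<^sup>+ \<xi>. hf * ennreal (\<bar>h tt \<xi>\<bar> ^ 2) + hf * ennreal (\<bar>h ss (\<xi> \<circ> \<rho>)\<bar> ^ 2) \<partial>\<mu>)"
      unfolding hf_def by (intro nn_integral_mono amgm_ennreal)
    also have "\<dots> = hf * G tt + hf * (\<integral>\<^sup>+ \<xi>. ennreal (\<bar>h ss (\<xi> \<circ> \<rho>)\<bar> ^ 2) \<partial>\<mu>)"
      unfolding G_def by (simp add: nn_integral_add nn_integral_cmult)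
    also have "(\<integral>\<^sup>+ \<xi>. ennreal (\<bar>h ss (\<xi> \<circ> \<rho>)\<bar> ^ 2) \<partial>\<mu>) = G ss"
      unfolding G_def by (rule sym_int[OF assms(2) \<rho>, where f = "\<lambda>\<xi>. ennreal (\<bar>h ss \<xi>\<bar> ^ 2)"]) measurable
    finally show ?thesis .
  qed
  have hf_fin: "hf < top" unfolding hf_def by (rule ennreal_less_top)
  have Vs_fin: "Vs < top"
    using simplexT_vol[of s n] assms(3) unfolding Vs_def by (simp add: order_le_less_trans)
  have step2: "(\<integral>\<^sup>+ tt \<in> ?T. (\<integral>\<^sup>+ ss \<in> ?S. (\<integral>\<^sup>+ \<xi>. ennreal (h tt \<xi> * h ss (\<xi> \<circ> \<rho>)) \<partial>\<mu>) \<partial>?L) \<partial>?L)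
      \<le> hf * J * Vt + (hf * Vs) * I" if \<rho>: "\<rho> permutes {..<n}" for \<rho>
  proof -
    have in2: "(\<integral>\<^sup>+ ss \<in> ?S. (\<integral>\<^sup>+ \<xi>. ennreal (h tt \<xi> * h ss (\<xi> \<circ> \<rho>)) \<partial>\<mu>) \<partial>?L)
        \<le> hf * J + (hf * Vs) * G tt" if tt: "tt \<in> ?T" for tt
    proof -
      have "(\<integral>\<^sup>+ ss \<in> ?S. (\<integral>\<^sup>+ \<xi>. ennreal (h tt \<xi> * h ss (\<xi> \<circ> \<rho>)) \<partial>\<mu>) \<partial>?L)
          \<le> (\<integral>\<^sup>+ ss \<in> ?S. (hf * G tt + hf * G ss) \<partial>?L)"
        using step1[OF _ _ \<rho>] tt Tsp
        by (intro nn_integral_mono) (auto simp: indicator_def subset_eq intro!: mult_right_mono)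
      also have "\<dots> \<le> hf * G tt * Vs + hf * J"
        unfolding Vs_def J_def by (rule inner_add_le[OF simplexT_sets hf_fin])
      finally show ?thesis by (simp add: ac_simps)
    qed
    have "(\<integral>\<^sup>+ tt \<in> ?T. (\<integral>\<^sup>+ ss \<in> ?S. (\<integral>\<^sup>+ \<xi>. ennreal (h tt \<xi> * h ss (\<xi> \<circ> \<rho>)) \<partial>\<mu>) \<partial>?L) \<partial>?L)
        \<le> (\<integral>\<^sup>+ tt \<in> ?T. (hf * J + (hf * Vs) * G tt) \<partial>?L)"
      using in2 by (intro nn_integral_mono) (auto simp: indicator_def intro!: mult_right_mono)
    also have "\<dots> \<le> hf * J * Vt + (hf * Vs) * I"
      unfolding Vt_def I_def
      by (rule inner_add_le[OF simplexT_sets]) (use hf_fin Vs_fin in \<open>simp add: ennreal_mult_less_top\<close>)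
    finally show ?thesis .
  qed
  have "(\<Sum>\<rho>\<in>{\<rho>. \<rho> permutes {..<n}}.
            \<integral>\<^sup>+ tt \<in> ?T. (\<integral>\<^sup>+ ss \<in> ?S.
               (\<integral>\<^sup>+ \<xi>. ennreal (h tt \<xi> * h ss (\<xi> \<circ> \<rho>)) \<partial>\<mu>) \<partial>?L) \<partial>?L)
        \<le> (\<Sum>\<rho>\<in>{\<rho>. \<rho> permutes {..<n}}. hf * J * Vt + (hf * Vs) * I)"
    using step2 by (intro sum_mono) auto
  also have "\<dots> = of_nat (fact n) * (hf * J * Vt + (hf * Vs) * I)"
    by (simp add: card_permutations[of "{..<n}" n])
  also have "\<dots> = hf * ((of_nat (fact n) * Vt) * J + (of_nat (fact n) * Vs) * I)"
    by (simp add: algebra_simps)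
  also have "\<dots> \<le> hf * (ennreal (t ^ n) * I + ennreal (s ^ n) * I)"
  proof -
    have JI: "J \<le> I" unfolding J_def I_def
      using simplexT_mono[OF assms(4), of n] by (intro nn_integral_mono) (auto simp: indicator_def)
    have "(of_nat (fact n) * Vt) * J \<le> ennreal (t ^ n) * I"
      unfolding Vt_def using fact_vol[of t n] assms JI by (intro mult_mono) auto
    moreover have "(of_nat (fact n) * Vs) * I \<le> ennreal (s ^ n) * I"
      unfolding Vs_def using fact_vol[of s n] assms by (intro mult_right_mono) auto
    ultimately show ?thesis by (intro mult_left_mono add_mono) auto
  qed
  also have "\<dots> = (hf * (ennreal (s ^ n) + ennreal (t ^ n))) * I"
    by (metis add.commute distrib_right mult.assoc)
  also have "ennreal (s ^ n) + ennreal (t ^ n) = ennreal (s ^ n + t ^ n)"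
    by (rule ennreal_plus[symmetric]) (use assms in auto)
  also have "hf * ennreal (s ^ n + t ^ n) = ennreal ((s ^ n + t ^ n) / 2)"
    unfolding hf_def by (subst ennreal_mult[symmetric]) (use assms in auto)
  finally show ?thesis unfolding I_def G_def .
qed

end
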